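(* Let $(\Omega,\mathcal F,\mathbb P)$ be a probability space. For each $N\in\mathbb N$ let $\{t_j\}_{j\in\mathbb N}=\{t_j^{(N)}\}_{j\in\mathbb N}$ be a sequence of positive random variables on it (dependence on $N$ suppressed) satisfying: (i) $\mathbb E(t_i)=\frac1N$ for all $i$ and all $N$; (ii) there exist $r>0$ and a constant $\tilde C>0$ such that $\mathbb E(t_i^{2+r})\le \frac{\tilde C}{N^{2+r}}$ for all $i$ and all $N$; (iii) for all $m\in\mathbb N$ (and all $N$), the vector $(t_1,\dots,t_m)$ is negatively superadditive dependent. Let $\tau_N=\sum_{j=1}^N t_j$. Then $\tau_N\to1$ almost surely as $N\to\infty$.
   Context: A function $\phi:\mathbb R^m\to\mathbb R$ is superadditive if $\phi(x\vee y)+\phi(x\wedge y)\ge\phi(x)+\phi(y)$ for all $x,y\in\mathbb R^m$, where $\vee$ and $\wedge$ denote componentwise maximum and minimum. A random vector $(X_1,\dots,X_m)$ is negatively superadditive dependent (NSD) if for every superadditive $\phi$ such that the expectation $\mathbb E\phi(X_1,\dots,X_m)$ exists, $\mathbb E\phi(X_1,\dots,X_m)\le\mathbb E\phi(X_1^*,\dots,X_m^* )$, where $X_1^*,\dots,X_m^*$ are independent and $X_i^*$ has the same distribution as $X_i$ for each $i$. *)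

theory Defs
  imports "HOL-Probability.Probability"
begin

text \<open>Vectors indexed by a finite set I of natural numbers are represented as
  extensional functions nat => real (elements of PiE I UNIV).
  Superadditivity w.r.t. componentwise max/min.\<close>

definition superadditive_on :: "nat set \<Rightarrow> ((nat \<Rightarrow> real) \<Rightarrow> real) \<Rightarrow> bool" where
  "superadditive_on I \<phi> \<longleftrightarrow>
     (\<forall>x \<in> PiE I (\<lambda>_. UNIV). \<forall>y \<in> PiE I (\<lambda>_. UNIV).
        \<phi> (\<lambda>i\<in>I. max (x i) (y i)) + \<phi> (\<lambda>i\<in>I. min (x i) (y i)) \<ge> \<phi> x + \<phi> y)"

text \<open>Negative superadditive dependence of the random vector (X i)_{i in I} on M:
  the independent copy (X_i^*) has joint law PiM I (distr M borel (X i)).\<close>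

definition NSD :: "'a measure \<Rightarrow> nat set \<Rightarrow> (nat \<Rightarrow> 'a \<Rightarrow> real) \<Rightarrow> bool" where
  "NSD M I X \<longleftrightarrow>
     (\<forall>\<phi>. superadditive_on I \<phi>
        \<and> integrable M (\<lambda>\<omega>. \<phi> (\<lambda>i\<in>I. X i \<omega>))
        \<and> integrable (PiM I (\<lambda>i. distr M borel (X i))) \<phi>
       \<longrightarrow> (\<integral>\<omega>. \<phi> (\<lambda>i\<in>I. X i \<omega>) \<partial>M) \<le> (\<integral>x. \<phi> x \<partial>(PiM I (\<lambda>i. distr M borel (X i)))))"

end

theory Submission
  imports Defs
begin


lemma exp_le_quad:
  fixes x :: real assumes "\<bar>x\<bar> \<le> 1" shows "exp x \<le> 1 + x + x\<^sup>2"
proof (cases "x \<ge> 0")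
  case True thus ?thesis using exp_bound assms by auto
next
  case False
  define y where "y = - x"
  have y: "0 \<le> y" "y \<le> 1" using False assms by (auto simp: y_def)
  have e: "1 + y + y\<^sup>2 / 2 \<le> exp y" using exp_lower_Taylor_quadratic y by auto
  have pos: "0 \<le> 1 - y + y\<^sup>2" using y by (simp add: power2_eq_square)
  have "1 \<le> (1 - y + y\<^sup>2) * (1 + y + y\<^sup>2 / 2)"
  proof -
    have "(1 - y + y\<^sup>2) * (1 + y + y\<^sup>2 / 2) = 1 + y\<^sup>2/2 + y^3/2 + y^4/2"
      by (simp add: algebra_simps power2_eq_square power3_eq_cube power4_eq_xxxx field_simps)
    thus ?thesis using y by simp
  qed
  also have "\<dots> \<le> (1 - y + y\<^sup>2) * exp y" using e pos by (intro mult_left_mono) auto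
  finally have "exp (-y) \<le> 1 - y + y\<^sup>2"
    by (simp add: exp_minus field_simps)
  thus ?thesis by (simp add: y_def)
qed

lemma two_point:
  fixes p q X Y :: real
  assumes "X \<ge> p" "X \<ge> q" "X > 0" "X * Y = p * q"
  shows "p + q \<le> X + Y"
proof -
  have "0 \<le> (X - p) * (X - q)" using assms by auto
  hence "X * (p + q) \<le> X * (X + Y)" using assms(4) by (simp add: algebra_simps power2_eq_square)
  thus ?thesis using assms(3) by (simp add: mult_le_cancel_left)
qed

lemma exp_super:
  fixes l u v A B :: real
  assumes "A + B = u + v" "B \<le> u" "B \<le> v"
  shows "exp (l * u) + exp (l * v) \<le> exp (l * A) + exp (l * B)"
proof -
  have prod: "exp (l * A) * exp (l * B) = exp (l * u) * exp (l * v)"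
    by (simp add: exp_add[symmetric] distrib_left[symmetric] assms(1))
  show ?thesis
  proof (cases "l \<ge> 0")
    case True
    have "u \<le> A" "v \<le> A" using assms by auto
    hence "exp (l * u) \<le> exp (l * A)" "exp (l * v) \<le> exp (l * A)" using True by (auto intro: mult_left_mono)
    thus ?thesis using two_point[OF _ _ _ prod] by auto
  next
    case False
    have "exp (l * u) \<le> exp (l * B)" "exp (l * v) \<le> exp (l * B)" using False assms
      by (auto simp: mult_le_cancel_left)
    thus ?thesis using two_point[of "exp (l * u)" "exp (l * B)" "exp (l * v)" "exp (l * A)"] prod
      by (auto simp: mult.commute)
  qed
qed

lemma super_phi:
  fixes h :: "real \<Rightarrow> real" assumes "mono h"
  shows "superadditive_on I (\<lambda>x. exp (l * (\<Sum>i\<in>I. h (x i))))"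
  unfolding superadditive_on_def
proof (intro ballI)
  fix x y :: "nat \<Rightarrow> real"
  have mx: "h (max a b) = max (h a) (h b)" for a b using assms by (auto simp: max_def mono_def intro: antisym)
  have mn: "h (min a b) = min (h a) (h b)" for a b using assms by (auto simp: min_def mono_def intro: antisym)
  define A where "A = (\<Sum>i\<in>I. max (h (x i)) (h (y i)))"
  define B where "B = (\<Sum>i\<in>I. min (h (x i)) (h (y i)))"
  have 1: "(\<Sum>i\<in>I. h ((\<lambda>i\<in>I. max (x i) (y i)) i)) = A" unfolding A_def
    by (intro sum.cong) (auto simp: mx)
  have 2: "(\<Sum>i\<in>I. h ((\<lambda>i\<in>I. min (x i) (y i)) i)) = B" unfolding B_def
    by (intro sum.cong) (auto simp: mn)
  have "A + B = (\<Sum>i\<in>I. h (x i)) + (\<Sum>i\<in>I. h (y i))"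
    unfolding A_def B_def sum.distrib[symmetric] by (intro sum.cong) auto
  moreover have "B \<le> (\<Sum>i\<in>I. h (x i))" "B \<le> (\<Sum>i\<in>I. h (y i))" unfolding B_def
    by (auto intro: sum_mono)
  ultimately show "exp (l * (\<Sum>i\<in>I. h (x i))) + exp (l * (\<Sum>i\<in>I. h (y i)))
    \<le> exp (l * (\<Sum>i\<in>I. h ((\<lambda>i\<in>I. max (x i) (y i)) i))) + exp (l * (\<Sum>i\<in>I. h ((\<lambda>i\<in>I. min (x i) (y i)) i)))"
    unfolding 1 2 using exp_super by blast
qed


definition clamp :: "real \<Rightarrow> real \<Rightarrow> real" where
  "clamp a s = max 0 (min s a)"

lemma clamp_mono: "mono (clamp a)" unfolding clamp_def mono_def by auto

lemma clamp_meas[measurable]: "clamp a \<in> borel_measurable borel"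
  unfolding clamp_def by measurable

lemma clamp_bound: "0 \<le> a \<Longrightarrow> \<bar>clamp a s\<bar> \<le> a" unfolding clamp_def by auto

lemma nsd_exp:
  assumes P: "prob_space M" and X[measurable]: "\<And>j. X j \<in> borel_measurable M"
    and nsd: "NSD M I X" and fin: "finite I" and a: "0 \<le> a"
  shows "(\<integral>\<omega>. exp (l * (\<Sum>i\<in>I. clamp a (X i \<omega>))) \<partial>M)
          \<le> (\<Prod>i\<in>I. \<integral>\<omega>. exp (l * clamp a (X i \<omega>)) \<partial>M)"
proof -
  interpret prob_space M by fact
  define D where "D = (\<lambda>i. distr M borel (X i))"
  have PD: "prob_space (D i)" for i unfolding D_def by (rule prob_space_distr) simp
  interpret PP: product_prob_space D I
    by (rule product_prob_space.intro, rule product_sigma_finite.intro)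
       (auto intro: prob_space_imp_sigma_finite PD simp: product_prob_space_axioms_def PD)
  define \<phi> where "\<phi> = (\<lambda>x::nat\<Rightarrow>real. exp (l * (\<Sum>i\<in>I. clamp a (x i))))"
  define B where "B = exp (\<bar>l\<bar> * (real (card I) * a))"
  have bnd: "\<bar>\<phi> x\<bar> \<le> B" for x
  proof -
    have "\<bar>\<Sum>i\<in>I. clamp a (x i)\<bar> \<le> (\<Sum>i\<in>I. a)"
      by (rule order_trans[OF sum_abs sum_mono]) (simp add: clamp_bound a)
    hence "\<bar>\<Sum>i\<in>I. clamp a (x i)\<bar> \<le> real (card I) * a" by simp
    hence "\<bar>l\<bar> * \<bar>\<Sum>i\<in>I. clamp a (x i)\<bar> \<le> \<bar>l\<bar> * (real (card I) * a)"
      by (rule mult_left_mono) simp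
    moreover have "l * (\<Sum>i\<in>I. clamp a (x i)) \<le> \<bar>l\<bar> * \<bar>\<Sum>i\<in>I. clamp a (x i)\<bar>"
      by (metis abs_ge_self abs_mult)
    ultimately have "l * (\<Sum>i\<in>I. clamp a (x i)) \<le> \<bar>l\<bar> * (real (card I) * a)" by linarith
    thus ?thesis unfolding \<phi>_def B_def by simp
  qed
  have phimeas: "\<phi> \<in> borel_measurable (PiM I D)"
    unfolding \<phi>_def D_def by measurable
  have eq1: "\<phi> (\<lambda>i\<in>I. X i \<omega>) = exp (l * (\<Sum>i\<in>I. clamp a (X i \<omega>)))" for \<omega>
    unfolding \<phi>_def by (intro arg_cong[where f=exp] arg_cong[where f="\<lambda>z. l * z"] sum.cong) auto
  have intM: "integrable M (\<lambda>\<omega>. \<phi> (\<lambda>i\<in>I. X i \<omega>))"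
    unfolding eq1 by (rule integrable_const_bound[where B=B]) (use bnd[unfolded \<phi>_def] in auto)
  have intP: "integrable (PiM I D) \<phi>"
    by (rule PP.P.integrable_const_bound[where B=B]) (use bnd phimeas in auto)
  have sa: "superadditive_on I \<phi>" unfolding \<phi>_def by (rule super_phi[OF clamp_mono])
  have "(\<integral>\<omega>. \<phi> (\<lambda>i\<in>I. X i \<omega>) \<partial>M) \<le> (\<integral>x. \<phi> x \<partial>PiM I D)"
    using nsd sa intM intP unfolding NSD_def D_def by blast
  also have "(\<integral>x. \<phi> x \<partial>PiM I D) = (\<integral>x. (\<Prod>i\<in>I. exp (l * clamp a (x i))) \<partial>PiM I D)"
    unfolding \<phi>_def by (simp add: sum_distrib_left exp_sum fin)
  also have "\<dots> = (\<Prod>i\<in>I. \<integral>s. exp (l * clamp a s) \<partial>D i)"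
  proof (rule PP.product_integral_prod[OF fin])
    fix i assume "i \<in> I"
    interpret Di: prob_space "D i" by (rule PD)
    have "norm (exp (l * clamp a s)) \<le> exp (\<bar>l\<bar> * a)" for s
    proof -
      have "l * clamp a s \<le> \<bar>l\<bar> * \<bar>clamp a s\<bar>" by (metis abs_ge_self abs_mult)
      also have "\<dots> \<le> \<bar>l\<bar> * a" by (intro mult_left_mono clamp_bound a) auto
      finally show ?thesis by simp
    qed
    then show "integrable (D i) (\<lambda>s. exp (l * clamp a s))"
      by (intro finite_measure.integrable_const_bound[OF prob_space.axioms(1)[OF PD], where B="exp (\<bar>l\<bar> * a)"]) (auto simp: D_def)
  qed
  also have "\<dots> = (\<Prod>i\<in>I. \<integral>\<omega>. exp (l * clamp a (X i \<omega>)) \<partial>M)"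
    unfolding D_def by (intro prod.cong refl integral_distr) auto
  finally show ?thesis unfolding eq1 .
qed



lemma int_from_nn:
  fixes f :: "'a \<Rightarrow> real"
  assumes [measurable]: "f \<in> borel_measurable M" and nn: "\<And>x. x \<in> space M \<Longrightarrow> 0 \<le> f x"
    and le: "(\<integral>\<^sup>+x. ennreal (f x) \<partial>M) \<le> ennreal c" and c: "0 \<le> c"
  shows "integrable M f" "integral\<^sup>L M f \<le> c"
proof -
  have fin: "(\<integral>\<^sup>+x. ennreal (f x) \<partial>M) < \<infinity>" using le by (simp add: le_less_trans)
  show "integrable M f"
    by (rule integrableI_nonneg) (use nn fin in auto)
  have "integral\<^sup>L M f = enn2real (\<integral>\<^sup>+ x. ennreal (f x) \<partial>M)"
    by (rule integral_eq_nn_integral) (use nn in auto)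
  also have "\<dots> \<le> c" using le c fin
    by (metis enn2real_ennreal enn2real_mono ennreal_less_top)
  finally show "integral\<^sup>L M f \<le> c" .
qed


lemma pt_sq:
  fixes t N r :: real assumes "t > 0" "N \<ge> 1" "r > 0"
  shows "t\<^sup>2 \<le> 1 / N\<^sup>2 + N powr r * t powr (2 + r)"
proof (cases "t \<le> 1 / N")
  case True
  hence "t\<^sup>2 \<le> (1/N)\<^sup>2" using assms by (intro power_mono) auto
  hence "t\<^sup>2 \<le> 1/N\<^sup>2" by (simp add: power_divide)
  moreover have "0 \<le> N powr r * t powr (2 + r)" by simp
  ultimately show ?thesis by linarith
next
  case False
  have "1 = (1/N) * N" using assms by simp
  also have "\<dots> \<le> t * N" using False assms by (intro mult_right_mono) auto
  finally have "1 \<le> N * t" by (simp add: mult.commute)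
  hence "1 \<le> (N * t) powr r" using assms by (intro ge_one_powr_ge_zero) auto
  hence "t\<^sup>2 * 1 \<le> t\<^sup>2 * (N * t) powr r" using assms by (intro mult_left_mono) auto
  moreover have "(N * t) powr r = N powr r * t powr r" using assms by (simp add: powr_mult)
  moreover have "t powr (2 + r) = t powr 2 * t powr r" using assms by (simp add: powr_add)
  moreover have "t powr 2 = t\<^sup>2" using assms by (simp add: powr_numeral)
  ultimately have "t\<^sup>2 \<le> N powr r * t powr (2 + r)" by (simp add: ac_simps)
  moreover have "0 \<le> 1 / N\<^sup>2" by simp
  ultimately show ?thesis by linarith
qed


lemma pt_trunc:
  fixes t L r :: real assumes "t > 0" "L > 0" "r > 0"
  shows "t - clamp (1/L) t \<le> L powr (1 + r) * t powr (2 + r)"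
proof (cases "t \<le> 1 / L")
  case True
  hence "clamp (1/L) t = t" using assms unfolding clamp_def by auto
  thus ?thesis by simp
next
  case False
  hence cl: "clamp (1/L) t = 1/L" using assms unfolding clamp_def by auto
  have "1 = (1/L) * L" using assms by simp
  also have "\<dots> \<le> t * L" using False assms by (intro mult_right_mono) auto
  finally have "1 \<le> L * t" by (simp add: mult.commute)
  hence "1 \<le> (L * t) powr (1 + r)" using assms by (intro ge_one_powr_ge_zero) auto
  hence "t * 1 \<le> t * (L * t) powr (1 + r)" using assms by (intro mult_left_mono) auto
  moreover have "(L * t) powr (1 + r) = L powr (1 + r) * t powr (1 + r)" using assms by (simp add: powr_mult)
  moreover have "t powr (2 + r) = t * t powr (1 + r)"
  proof -
    have "t powr (2 + r) = t powr (1 + (1 + r))" by (simp add: add.assoc[symmetric])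
    also have "\<dots> = t powr 1 * t powr (1 + r)" using assms by (simp only: powr_add)
    finally show ?thesis using assms by simp
  qed
  ultimately have "t \<le> L powr (1 + r) * t powr (2 + r)" by (simp add: ac_simps)
  moreover have "0 < 1 / L" using assms by simp
  ultimately show ?thesis using cl by linarith
qed


lemma factor_bound:
  fixes T :: "'a \<Rightarrow> real" and N r C L s :: real
  assumes P: "prob_space M" and T[measurable]: "T \<in> borel_measurable M"
    and pos: "\<And>\<omega>. \<omega> \<in> space M \<Longrightarrow> T \<omega> > 0"
    and m1: "(\<integral>\<^sup>+\<omega>. ennreal (T \<omega>) \<partial>M) = ennreal (1/N)"
    and m2: "(\<integral>\<^sup>+\<omega>. ennreal (T \<omega> powr (2+r)) \<partial>M) \<le> ennreal (C / N powr (2+r))"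
    and N: "N \<ge> 1" and r: "r > 0" and C: "C > 0" and L: "L > 0"
    and c1: "L\<^sup>2 \<le> N" and c2: "L powr (2+r) \<le> N powr (1+r)"
    and s: "s = 1 \<or> s = -1"
  shows "(\<integral>\<omega>. exp (s * L * clamp (1/L) (T \<omega>)) \<partial>M) \<le> exp (s * L / N + (2*C+1) / N)"
proof -
  interpret prob_space M by fact
  define K where "K = L * L powr (1 + r) + L\<^sup>2 * N powr r"
  define R where "R = (\<lambda>\<omega>. 1 + s * L * T \<omega> + K * T \<omega> powr (2+r) + L\<^sup>2 / N\<^sup>2)"
  have intT: "integrable M T" and ET: "integral\<^sup>L M T \<le> 1/N"
    using int_from_nn[of T M "1/N"] pos m1 N by (auto simp: less_imp_le)
  have "integral\<^sup>L M T = enn2real (\<integral>\<^sup>+ x. ennreal (T x) \<partial>M)"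
    by (rule integral_eq_nn_integral) (use pos in \<open>auto simp: less_imp_le\<close>)
  hence ET': "integral\<^sup>L M T = 1/N" using m1 N by simp
  have intT2: "integrable M (\<lambda>\<omega>. T \<omega> powr (2+r))"
    and ET2: "(\<integral>\<omega>. T \<omega> powr (2+r) \<partial>M) \<le> C / N powr (2+r)"
    using int_from_nn[of "\<lambda>\<omega>. T \<omega> powr (2+r)" M "C / N powr (2+r)"] m2 C N by auto
  have pw: "exp (s * L * clamp (1/L) (T \<omega>)) \<le> R \<omega>" if \<omega>: "\<omega> \<in> space M" for \<omega>
  proof -
    define t where "t = T \<omega>"
    define Y where "Y = clamp (1/L) t"
    have t: "t > 0" using pos \<omega> t_def by auto
    have Y: "0 \<le> Y" "Y \<le> t" "Y \<le> 1/L" using t L unfolding Y_def clamp_def by auto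
    have LY: "L * Y \<le> 1" using Y L by (simp add: field_simps)
    have abs1: "\<bar>s * L * Y\<bar> \<le> 1" using s LY Y L by auto
    have "exp (s * L * Y) \<le> 1 + s * L * Y + (s * L * Y)\<^sup>2" by (rule exp_le_quad[OF abs1])
    also have "(s * L * Y)\<^sup>2 = L\<^sup>2 * Y\<^sup>2" using s by (auto simp: power_mult_distrib)
    also have "s * L * Y \<le> s * L * t + L * (t - Y)"
      using s Y L by (auto simp: algebra_simps)
    also have "L\<^sup>2 * Y\<^sup>2 \<le> L\<^sup>2 * t\<^sup>2" using Y by (intro mult_left_mono power_mono) auto
    also have "L * (t - Y) \<le> L * (L powr (1 + r) * t powr (2 + r))"
      using pt_trunc[OF t L r] L unfolding Y_def by (intro mult_left_mono) auto
    also have "L\<^sup>2 * t\<^sup>2 \<le> L\<^sup>2 * (1 / N\<^sup>2 + N powr r * t powr (2 + r))"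
      using pt_sq[OF t N r] by (intro mult_left_mono) auto
    finally show ?thesis unfolding R_def K_def t_def[symmetric] Y_def[symmetric]
      by (simp add: algebra_simps)
  qed
  have intL: "integrable M (\<lambda>\<omega>. exp (s * L * clamp (1/L) (T \<omega>)))"
  proof (rule integrable_const_bound[where B="exp 1"])
    show "AE \<omega> in M. norm (exp (s * L * clamp (1/L) (T \<omega>))) \<le> exp 1"
    proof (intro AE_I2)
      fix \<omega> assume "\<omega> \<in> space M"
      have "\<bar>clamp (1/L) (T \<omega>)\<bar> \<le> 1/L" using L by (intro clamp_bound) auto
      hence "\<bar>s * L * clamp (1/L) (T \<omega>)\<bar> \<le> 1" using s L by (auto simp: abs_mult field_simps)
      hence "s * L * clamp (1/L) (T \<omega>) \<le> 1" by (rule abs_le_D1)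
      thus "norm (exp (s * L * clamp (1/L) (T \<omega>))) \<le> exp 1" by simp
    qed
  qed simp
  have intR: "integrable M R" unfolding R_def using intT intT2 by auto
  have "(\<integral>\<omega>. exp (s * L * clamp (1/L) (T \<omega>)) \<partial>M) \<le> integral\<^sup>L M R"
    by (rule integral_mono[OF intL intR pw])
  also have "integral\<^sup>L M R = 1 + s * L * integral\<^sup>L M T + K * (\<integral>\<omega>. T \<omega> powr (2+r) \<partial>M) + L\<^sup>2 / N\<^sup>2"
    unfolding R_def using intT intT2 by (simp add: prob_space)
  also have "\<dots> \<le> 1 + s * L / N + K * (C / N powr (2+r)) + L\<^sup>2 / N\<^sup>2"
  proof -
    have "0 \<le> K" unfolding K_def using L by simp
    have "K * (\<integral>\<omega>. T \<omega> powr (2+r) \<partial>M) \<le> K * (C / N powr (2+r))"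
      by (rule mult_left_mono[OF ET2 \<open>0 \<le> K\<close>])
    thus ?thesis using ET' by simp
  qed
  also have "\<dots> \<le> 1 + (s * L / N + (2*C+1) / N)"
  proof -
    have Np: "N > 0" using N by simp
    have e1: "L * L powr (1 + r) = L powr (2 + r)"
    proof -
      have "L powr (2 + r) = L powr (1 + (1 + r))" by (simp add: add.assoc[symmetric])
      also have "\<dots> = L powr 1 * L powr (1 + r)" using L by (simp only: powr_add)
      finally show ?thesis using L by simp
    qed
    have e2: "N powr (2 + r) = N * N powr (1 + r)"
    proof -
      have "N powr (2 + r) = N powr (1 + (1 + r))" by (simp add: add.assoc[symmetric])
      also have "\<dots> = N powr 1 * N powr (1 + r)" using Np by (simp only: powr_add)
      finally show ?thesis using Np by simp
    qed
    have e3: "N powr (2 + r) = N\<^sup>2 * N powr r"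
    proof -
      have "N powr (2 + r) = N powr 2 * N powr r" using Np by (simp only: powr_add)
      thus ?thesis using Np by (simp add: powr_numeral)
    qed
    have Npos: "N powr (1 + r) > 0" "N powr r > 0" using Np by auto
    have k1: "L powr (2 + r) * (C / N powr (2 + r)) \<le> C / N"
    proof -
      have "L powr (2 + r) * (C / N powr (2 + r)) = C * (L powr (2 + r) / N powr (1 + r)) / N"
        using e2 Np Npos by (simp add: field_simps)
      also have "\<dots> \<le> C * 1 / N" using c2 Npos C Np
        by (intro divide_right_mono mult_left_mono) (auto simp: divide_le_eq)
      finally show ?thesis by simp
    qed
    have k2: "L\<^sup>2 * N powr r * (C / N powr (2 + r)) \<le> C / N"
    proof -
      have "L\<^sup>2 * N powr r * (C / N powr (2 + r)) = C * (L\<^sup>2 / N) / N"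
        using e3 Np Npos by (simp add: field_simps power2_eq_square)
      also have "\<dots> \<le> C * 1 / N" using c1 C Np
        by (intro divide_right_mono mult_left_mono) (auto simp: divide_le_eq)
      finally show ?thesis by simp
    qed
    have k3: "L\<^sup>2 / N\<^sup>2 \<le> 1 / N"
    proof -
      have "L\<^sup>2 / N\<^sup>2 = (L\<^sup>2 / N) / N" by (simp add: power2_eq_square)
      also have "\<dots> \<le> 1 / N" using c1 Np by (intro divide_right_mono) (auto simp: divide_le_eq)
      finally show ?thesis .
    qed
    have "K * (C / N powr (2+r)) \<le> 2 * C / N"
      unfolding K_def distrib_right e1 using k1 k2 by simp
    thus ?thesis using k3 by (simp add: add_divide_distrib)
  qed
  also have "\<dots> \<le> exp (s * L / N + (2*C+1) / N)" by (rule exp_ge_add_one_self)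
  finally show ?thesis .
qed


lemma tail_bound:
  fixes t :: "nat \<Rightarrow> nat \<Rightarrow> 'a \<Rightarrow> real" and r C L s \<epsilon> :: real and N :: nat
  assumes P: "prob_space M" and tm[measurable]: "\<And>N j. t N j \<in> borel_measurable M"
    and pos: "\<And>N j \<omega>. \<omega> \<in> space M \<Longrightarrow> t N j \<omega> > 0"
    and m1: "\<And>N i. N \<ge> 1 \<Longrightarrow> i \<ge> 1 \<Longrightarrow>
           (\<integral>\<^sup>+ \<omega>. ennreal (t N i \<omega>) \<partial>M) = ennreal (1 / real N)"
    and r: "r > 0" and C: "C > 0"
    and m2: "\<And>N i. N \<ge> 1 \<Longrightarrow> i \<ge> 1 \<Longrightarrow>
           (\<integral>\<^sup>+ \<omega>. ennreal (t N i \<omega> powr (2 + r)) \<partial>M) \<le> ennreal (C / real N powr (2 + r))"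
    and nsd: "NSD M {1..N} (t N)" and N: "N \<ge> 1" and L: "L > 0"
    and c1: "L\<^sup>2 \<le> real N" and c2: "L powr (2+r) \<le> real N powr (1+r)"
    and s: "s = 1 \<or> s = -1" and eps: "\<epsilon> > 0"
  shows "measure M {\<omega>\<in>space M. s * ((\<Sum>j=1..N. clamp (1/L) (t N j \<omega>)) - 1) \<ge> \<epsilon>}
           \<le> exp (2*C+1) * exp (- \<epsilon> * L)"
proof -
  interpret prob_space M by fact
  define S where "S = (\<lambda>\<omega>. \<Sum>j=1..N. clamp (1/L) (t N j \<omega>))"
  define A where "A = {\<omega>\<in>space M. s * (S \<omega> - 1) \<ge> \<epsilon>}"
  have Smeas[measurable]: "S \<in> borel_measurable M" unfolding S_def by measurable
  have Asets[measurable]: "A \<in> sets M" unfolding A_def by measurable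
  have RN: "real N \<ge> 1" using N by simp
  have "(\<integral>\<omega>. exp (s * L * S \<omega>) \<partial>M) \<le> (\<Prod>i\<in>{1..N}. \<integral>\<omega>. exp (s * L * clamp (1/L) (t N i \<omega>)) \<partial>M)"
    unfolding S_def using nsd_exp[OF P tm nsd _, of "1/L" "s * L"] L by simp
  also have "\<dots> \<le> (\<Prod>i\<in>{1..N}. exp (s * L / real N + (2*C+1) / real N))"
  proof (rule prod_mono, intro conjI)
    fix i assume i: "i \<in> {1..N}"
    show "0 \<le> (\<integral>\<omega>. exp (s * L * clamp (1/L) (t N i \<omega>)) \<partial>M)" by (intro Bochner_Integration.integral_nonneg) simp
    show "(\<integral>\<omega>. exp (s * L * clamp (1/L) (t N i \<omega>)) \<partial>M) \<le> exp (s * L / real N + (2*C+1) / real N)"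
      by (rule factor_bound[OF P tm pos m1 m2 RN r C L c1 c2 s]) (use i N in auto)
  qed
  also have "\<dots> = exp (s * L / real N + (2*C+1) / real N) ^ N" by simp
  also have "\<dots> = exp (real N * (s * L / real N + (2*C+1) / real N))"
    by (rule exp_of_nat_mult[symmetric])
  also have "\<dots> = exp (s * L + (2*C+1))" using RN by (simp add: field_simps)
  finally have mgf: "(\<integral>\<omega>. exp (s * L * S \<omega>) \<partial>M) \<le> exp (s * L + (2*C+1))" .
  have intE: "integrable M (\<lambda>\<omega>. exp (- s * L - \<epsilon> * L) * exp (s * L * S \<omega>))"
  proof (intro integrable_mult_right integrable_const_bound[where B="exp (real N)"])
    show "AE \<omega> in M. norm (exp (s * L * S \<omega>)) \<le> exp (real N)"
    proof (intro AE_I2)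
      fix \<omega> assume "\<omega> \<in> space M"
      have "\<bar>S \<omega>\<bar> \<le> (\<Sum>j=1..N. 1/L)" unfolding S_def
        by (rule order_trans[OF sum_abs sum_mono]) (use L in \<open>auto intro: clamp_bound\<close>)
      hence "\<bar>S \<omega>\<bar> \<le> real N / L" by simp
      hence "L * \<bar>S \<omega>\<bar> \<le> L * (real N / L)" using L by (intro mult_left_mono) auto
      hence "\<bar>s * L * S \<omega>\<bar> \<le> L * (real N / L)" using s L by (auto simp: abs_mult)
      hence "\<bar>s * L * S \<omega>\<bar> \<le> real N" using L by simp
      hence "s * L * S \<omega> \<le> real N" by (rule abs_le_D1)
      thus "norm (exp (s * L * S \<omega>)) \<le> exp (real N)" by simp
    qed
  qed simp
  have "measure M A = (\<integral>\<omega>. indicator A \<omega> \<partial>M)" using Asets by (simp add: Int_absorb2 sets.sets_into_space)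
  also have "\<dots> \<le> (\<integral>\<omega>. exp (- s * L - \<epsilon> * L) * exp (s * L * S \<omega>) \<partial>M)"
  proof (rule integral_mono[OF _ intE])
    show "integrable M (indicator A :: 'a \<Rightarrow> real)" using Asets by (simp add: emeasure_eq_measure)
    fix \<omega> assume \<omega>: "\<omega> \<in> space M"
    show "indicator A \<omega> \<le> exp (- s * L - \<epsilon> * L) * exp (s * L * S \<omega>)"
    proof (cases "\<omega> \<in> A")
      case True
      hence "s * (S \<omega> - 1) \<ge> \<epsilon>" unfolding A_def by auto
      hence "L * \<epsilon> \<le> L * (s * (S \<omega> - 1))" using L by (intro mult_left_mono) auto
      hence "0 \<le> - s * L - \<epsilon> * L + s * L * S \<omega>" by (simp add: algebra_simps)
      hence "1 \<le> exp (- s * L - \<epsilon> * L + s * L * S \<omega>)" by simp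
      thus ?thesis using True by (simp add: exp_add)
    qed simp
  qed
  also have "\<dots> = exp (- s * L - \<epsilon> * L) * (\<integral>\<omega>. exp (s * L * S \<omega>) \<partial>M)" by simp
  also have "\<dots> \<le> exp (- s * L - \<epsilon> * L) * exp (s * L + (2*C+1))"
    by (rule mult_left_mono[OF mgf]) simp
  also have "\<dots> = exp (2*C+1) * exp (- \<epsilon> * L)" by (simp add: exp_add[symmetric] algebra_simps)
  finally show ?thesis unfolding A_def S_def .
qed


lemma single_trunc:
  fixes T :: "'a \<Rightarrow> real" and L r c :: real
  assumes P: "prob_space M" and T[measurable]: "T \<in> borel_measurable M"
    and pos: "\<And>\<omega>. \<omega> \<in> space M \<Longrightarrow> T \<omega> > 0"
    and m2: "(\<integral>\<^sup>+\<omega>. ennreal (T \<omega> powr (2+r)) \<partial>M) \<le> ennreal c" and c: "c \<ge> 0"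
    and L: "L > 0" and r: "r > 0"
  shows "measure M {\<omega>\<in>space M. T \<omega> > 1/L} \<le> L powr (2+r) * c"
proof -
  interpret prob_space M by fact
  define A where "A = {\<omega>\<in>space M. T \<omega> > 1/L}"
  have Asets[measurable]: "A \<in> sets M" unfolding A_def by measurable
  have intT2: "integrable M (\<lambda>\<omega>. T \<omega> powr (2+r))"
    and ET2: "(\<integral>\<omega>. T \<omega> powr (2+r) \<partial>M) \<le> c"
    using int_from_nn[of "\<lambda>\<omega>. T \<omega> powr (2+r)" M c] m2 c by auto
  have "measure M A = (\<integral>\<omega>. indicator A \<omega> \<partial>M)" using Asets by (simp add: Int_absorb2 sets.sets_into_space)
  also have "\<dots> \<le> (\<integral>\<omega>. L powr (2+r) * T \<omega> powr (2+r) \<partial>M)"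
  proof (rule integral_mono)
    show "integrable M (indicator A :: 'a \<Rightarrow> real)" using Asets by (simp add: emeasure_eq_measure)
    show "integrable M (\<lambda>\<omega>. L powr (2+r) * T \<omega> powr (2+r))" using intT2 by simp
    fix \<omega> assume \<omega>: "\<omega> \<in> space M"
    show "indicator A \<omega> \<le> L powr (2+r) * T \<omega> powr (2+r)"
    proof (cases "\<omega> \<in> A")
      case True
      hence "T \<omega> > 1/L" unfolding A_def by auto
      hence "1 \<le> L * T \<omega>" using L by (simp add: field_simps)
      hence "1 \<le> (L * T \<omega>) powr (2+r)" using r by (intro ge_one_powr_ge_zero) auto
      also have "(L * T \<omega>) powr (2+r) = L powr (2+r) * T \<omega> powr (2+r)"
        using L pos[OF \<omega>] by (simp add: powr_mult)
      finally show ?thesis using True by simp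
    qed simp
  qed
  also have "\<dots> = L powr (2+r) * (\<integral>\<omega>. T \<omega> powr (2+r) \<partial>M)" by simp
  also have "\<dots> \<le> L powr (2+r) * c" by (rule mult_left_mono[OF ET2]) simp
  finally show ?thesis unfolding A_def .
qed

lemma exp_decay_summable:
  fixes e b :: real assumes e: "e > 0" and b: "b > 0"
  shows "summable (\<lambda>N::nat. exp (- e * real N powr b))"
proof -
  define k :: nat where "k = nat \<lceil>2 / b\<rceil>"
  have kpos: "k > 0" using b unfolding k_def by auto
  have kb: "real k * b \<ge> 2"
  proof -
    have "real k \<ge> 2 / b" unfolding k_def by linarith
    thus ?thesis using b by (simp add: field_simps)
  qed
  define K where "K = (real k / e) ^ k"
  have bound: "exp (- e * real N powr b) \<le> K * inverse (real N ^ 2)" if N: "N \<ge> 1" for N :: nat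
  proof -
    define x where "x = e * real N powr b"
    have x: "x > 0" using e N unfolding x_def by simp
    have "(x / real k) ^ k \<le> exp (x / real k) ^ k"
      using x kpos by (intro power_mono) (auto intro: order_trans[OF _ exp_ge_add_one_self])
    also have "\<dots> = exp x" using kpos by (simp add: exp_of_nat_mult[symmetric])
    finally have ex: "(x / real k) ^ k \<le> exp x" .
    have "(x / real k) ^ k = (e / real k) ^ k * (real N powr b) ^ k"
      unfolding x_def by (simp add: power_mult_distrib power_divide)
    also have "(real N powr b) ^ k = real N powr (real k * b)"
      using N by (simp add: powr_realpow[symmetric] powr_powr mult.commute)
    also have "real N powr (real k * b) \<ge> real N powr 2"
      using N kb by (intro powr_mono) auto
    hence "(e / real k) ^ k * real N powr (real k * b) \<ge> (e / real k) ^ k * real N ^ 2"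
      using N e by (intro mult_left_mono) (auto simp: powr_numeral)
    finally have "(e / real k) ^ k * real N ^ 2 \<le> exp x" using ex by linarith
    hence "exp (-x) \<le> 1 / ((e / real k) ^ k * real N ^ 2)"
      using N e kpos x by (simp add: exp_minus field_simps)
    also have "\<dots> = K * inverse (real N ^ 2)" unfolding K_def
      using e kpos by (simp add: field_simps power_divide)
    finally show ?thesis unfolding x_def by simp
  qed
  show ?thesis
  proof (rule summable_comparison_test_ev)
    show "eventually (\<lambda>N. norm (exp (- e * real N powr b)) \<le> K * inverse (real N ^ 2)) sequentially"
      using bound by (auto simp: eventually_sequentially)
    show "summable (\<lambda>N. K * inverse (real N ^ 2))"
      by (intro summable_mult inverse_power_summable) auto
  qed
qed


lemma conv_from_eps:
  fixes x :: "nat \<Rightarrow> real"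
  assumes "\<forall>k. eventually (\<lambda>N. \<bar>x N - 1\<bar> \<le> 1 / real (Suc k)) sequentially"
  shows "x \<longlonglongrightarrow> 1"
proof (rule LIMSEQ_I)
  fix e :: real assume e: "0 < e"
  obtain k where k: "inverse (real (Suc k)) < e" using reals_Archimedean[OF e] by auto
  from assms obtain no where "\<forall>N\<ge>no. \<bar>x N - 1\<bar> \<le> 1 / real (Suc k)"
    by (auto simp: eventually_sequentially)
  thus "\<exists>no. \<forall>n\<ge>no. norm (x n - 1) < e" using k by (auto simp: inverse_eq_divide) (meson le_less_trans)
qed

theorem lemma4p3:
  fixes M :: "'a measure" and t :: "nat \<Rightarrow> nat \<Rightarrow> 'a \<Rightarrow> real" and r C :: real
  assumes "prob_space M"
    and "\<And>N j. t N j \<in> borel_measurable M"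
    and "\<And>N j \<omega>. \<omega> \<in> space M \<Longrightarrow> t N j \<omega> > 0"
    and "\<And>N i. N \<ge> 1 \<Longrightarrow> i \<ge> 1 \<Longrightarrow>
           (\<integral>\<^sup>+ \<omega>. ennreal (t N i \<omega>) \<partial>M) = ennreal (1 / real N)"
    and "r > 0" and "C > 0"
    and "\<And>N i. N \<ge> 1 \<Longrightarrow> i \<ge> 1 \<Longrightarrow>
           (\<integral>\<^sup>+ \<omega>. ennreal (t N i \<omega> powr (2 + r)) \<partial>M) \<le> ennreal (C / real N powr (2 + r))"
    and "\<And>N m. N \<ge> 1 \<Longrightarrow> m \<ge> 1 \<Longrightarrow> NSD M {1..m} (t N)"
  shows "AE \<omega> in M. (\<lambda>N. \<Sum>j=1..N. t N j \<omega>) \<longlonglongrightarrow> 1"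
proof -
  note P = assms(1) and tm[measurable] = assms(2) and pos = assms(3) and m1 = assms(4)
    and r = assms(5) and C = assms(6) and m2 = assms(7) and nsd = assms(8)
  interpret prob_space M by fact
  define \<beta> where "\<beta> = r / (2 * (2 + r))"
  have \<beta>: "\<beta> > 0" using r unfolding \<beta>_def by simp
  define L where "L = (\<lambda>N::nat. real N powr \<beta>)"
  define \<tau> where "\<tau> = (\<lambda>N \<omega>. \<Sum>j=1..N. t N j \<omega>)"
  have Lpos: "L N > 0" if "N \<ge> 1" for N using that unfolding L_def by simp
  have c1: "(L N)\<^sup>2 \<le> real N" if N: "N \<ge> 1" for N
  proof -
    have "(L N)\<^sup>2 = real N powr (\<beta> * 2)" unfolding L_def using N
      by (simp add: powr_powr[symmetric] powr_numeral)
    also have "\<dots> \<le> real N powr 1" using N r by (intro powr_mono) (auto simp: \<beta>_def field_simps)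
    finally show ?thesis using N by simp
  qed
  have c2: "L N powr (2+r) \<le> real N powr (1+r)" if N: "N \<ge> 1" for N
  proof -
    have "L N powr (2+r) = real N powr (\<beta> * (2+r))" unfolding L_def using N by (simp add: powr_powr)
    also have "\<dots> \<le> real N powr (1+r)" using N r by (intro powr_mono) (auto simp: \<beta>_def field_simps)
    finally show ?thesis .
  qed
  define TR where "TR = (\<lambda>N::nat. real N * (L N powr (2+r) * (C / real N powr (2+r))))"
  have TR_eq: "TR N = C * real N powr (- (1 + r/2))" if N: "N \<ge> 1" for N
  proof -
    have "L N powr (2+r) = real N powr (\<beta> * (2+r))" unfolding L_def using N by (simp add: powr_powr)
    also have "\<beta> * (2+r) = r/2" unfolding \<beta>_def using r by (simp add: field_simps)
    finally have "TR N = C * (real N powr 1 * real N powr (r/2) / real N powr (2+r))"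
      unfolding TR_def using N by simp
    also have "real N powr 1 * real N powr (r/2) / real N powr (2+r) = real N powr (1 + r/2 - (2+r))"
    proof -
      have "real N powr 1 * real N powr (r/2) = real N powr (1 + r/2)" by (rule powr_add[symmetric])
      moreover have "real N powr (1 + r/2 - (2+r)) = real N powr (1 + r/2) / real N powr (2+r)"
        by (rule powr_diff)
      ultimately show ?thesis by simp
    qed
    also have "1 + r/2 - (2+r) = - (1 + r/2)" by simp
    finally show ?thesis .
  qed
  have TR_sum: "summable TR"
  proof (rule summable_comparison_test_ev)
    show "eventually (\<lambda>N. norm (TR N) \<le> C * real N powr (- (1 + r/2))) sequentially"
      using TR_eq C by (auto simp: eventually_sequentially intro!: exI[of _ 1])
    show "summable (\<lambda>N. C * real N powr (- (1 + r/2)))"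
      using r by (intro summable_mult) (simp add: summable_real_powr_iff)
  qed
  have main: "AE \<omega> in M. eventually (\<lambda>N. \<bar>\<tau> N \<omega> - 1\<bar> \<le> \<epsilon>) sequentially" if eps: "\<epsilon> > 0" for \<epsilon>
  proof -
    define A where "A = (\<lambda>N. {\<omega>\<in>space M. \<bar>\<tau> N \<omega> - 1\<bar> > \<epsilon>})"
    have Asets[measurable]: "A N \<in> sets M" for N unfolding A_def \<tau>_def by measurable
    define g where "g = (\<lambda>N. TR N + 2 * (exp (2*C+1) * exp (- \<epsilon> * L N)))"
    have gsum: "summable g" unfolding g_def L_def
      by (intro summable_add TR_sum summable_mult exp_decay_summable eps \<beta>)
    have Ab: "measure M (A N) \<le> g N" if N: "N \<ge> 1" for N
    proof -
      define S where "S = (\<lambda>\<omega>. \<Sum>j=1..N. clamp (1/L N) (t N j \<omega>))"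
      define Tr where "Tr = (\<Union>j\<in>{1..N}. {\<omega>\<in>space M. t N j \<omega> > 1/L N})"
      define U where "U = {\<omega>\<in>space M. 1 * ((\<Sum>j=1..N. clamp (1/L N) (t N j \<omega>)) - 1) \<ge> \<epsilon>}"
      define D where "D = {\<omega>\<in>space M. -1 * ((\<Sum>j=1..N. clamp (1/L N) (t N j \<omega>)) - 1) \<ge> \<epsilon>}"
      have [measurable]: "Tr \<in> sets M" "U \<in> sets M" "D \<in> sets M"
        unfolding Tr_def U_def D_def by measurable
      have sub: "A N \<subseteq> Tr \<union> U \<union> D"
      proof
        fix \<omega> assume \<omega>: "\<omega> \<in> A N"
        show "\<omega> \<in> Tr \<union> U \<union> D"
        proof (cases "\<omega> \<in> Tr")
          case False
          have sp: "\<omega> \<in> space M" using \<omega> unfolding A_def by auto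
          have "clamp (1/L N) (t N j \<omega>) = t N j \<omega>" if j: "j \<in> {1..N}" for j
          proof -
            have "\<not> t N j \<omega> > 1/L N" using False j sp unfolding Tr_def by auto
            thus ?thesis using pos[OF sp, of N j] unfolding clamp_def by simp
          qed
          hence "(\<Sum>j=1..N. clamp (1/L N) (t N j \<omega>)) = \<tau> N \<omega>" unfolding \<tau>_def by (intro sum.cong) auto
          thus ?thesis using \<omega> sp unfolding A_def U_def D_def by auto
        qed auto
      qed
      have "measure M (A N) \<le> measure M (Tr \<union> U \<union> D)"
        by (rule finite_measure_mono[OF sub]) simp
      also have "\<dots> \<le> measure M Tr + measure M U + measure M D"
        by (smt (verit) measure_Un_le sets.Un \<open>Tr \<in> sets M\<close> \<open>U \<in> sets M\<close> \<open>D \<in> sets M\<close>)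
      also have "measure M Tr \<le> TR N"
      proof -
        have "measure M Tr \<le> (\<Sum>j\<in>{1..N}. measure M {\<omega>\<in>space M. t N j \<omega> > 1/L N})"
          unfolding Tr_def by (rule finite_measure_subadditive_finite) auto
        also have "\<dots> \<le> (\<Sum>j\<in>{1..N}. L N powr (2+r) * (C / real N powr (2+r)))"
          by (intro sum_mono single_trunc[OF P tm pos m2 _ Lpos r]) (use N C in auto)
        also have "\<dots> = TR N" unfolding TR_def by simp
        finally show ?thesis .
      qed
      also have "measure M U \<le> exp (2*C+1) * exp (- \<epsilon> * L N)"
        unfolding U_def by (rule tail_bound[where s=1, OF P tm pos m1 r C m2 nsd[OF N N] N Lpos[OF N] c1[OF N] c2[OF N] _ eps]) auto
      also have "measure M D \<le> exp (2*C+1) * exp (- \<epsilon> * L N)"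
        unfolding D_def by (rule tail_bound[where s="-1", OF P tm pos m1 r C m2 nsd[OF N N] N Lpos[OF N] c1[OF N] c2[OF N] _ eps]) auto
      finally show ?thesis unfolding g_def by (simp add: ac_simps)
    qed
    have Asum: "summable (\<lambda>N. measure M (A N))"
    proof (rule summable_comparison_test_ev[OF _ gsum])
      show "eventually (\<lambda>N. norm (measure M (A N)) \<le> g N) sequentially"
        using Ab by (auto simp: eventually_sequentially intro!: exI[of _ 1])
    qed
    have "AE \<omega> in M. eventually (\<lambda>N. \<omega> \<in> space M - A N) sequentially"
      by (rule borel_cantelli_AE1[OF Asets _ Asum]) (simp add: emeasure_eq_measure)
    thus ?thesis
    proof (rule AE_mp, intro AE_I2 impI)
      fix \<omega> assume "\<omega> \<in> space M" "eventually (\<lambda>N. \<omega> \<in> space M - A N) sequentially"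
      hence "eventually (\<lambda>N. \<not> \<epsilon> < \<bar>\<tau> N \<omega> - 1\<bar>) sequentially" by (simp add: A_def)
      thus "eventually (\<lambda>N. \<bar>\<tau> N \<omega> - 1\<bar> \<le> \<epsilon>) sequentially"
        by (rule eventually_mono) simp
    qed
  qed
  have "AE \<omega> in M. \<forall>k. eventually (\<lambda>N. \<bar>\<tau> N \<omega> - 1\<bar> \<le> 1 / real (Suc k)) sequentially"
    unfolding AE_all_countable by (intro allI main) simp
  thus ?thesis
  proof (rule AE_mp, intro AE_I2 impI)
    fix \<omega> assume "\<forall>k. eventually (\<lambda>N. \<bar>\<tau> N \<omega> - 1\<bar> \<le> 1 / real (Suc k)) sequentially"
    hence "(\<lambda>N. \<tau> N \<omega>) \<longlonglongrightarrow> 1" by (rule conv_from_eps)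
    thus "(\<lambda>N. \<Sum>j=1..N. t N j \<omega>) \<longlonglongrightarrow> 1" unfolding \<tau>_def .
  qed
qed

end
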